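(* Let $q$ be a prime power and $n \ge 1$. Let $a : M_n(\mathbb{F}_q) \to \mathbb{R}$ be a factorization function. Then there is a function $\varphi : M_n(\mathbb{F}_q) \to \mathbb{R}$ of von Mangoldt type such that $\varphi(f) = a(f)$ for all squarefree $f \in M_n(\mathbb{F}_q)$.
   Context: $M_n(\mathbb{F}_q)$ is the set of monic degree-$n$ polynomials in $\mathbb{F}_q[x]$. A factorization function is a function $a : M_n(\mathbb{F}_q) \to \mathbb{R}$ such that whenever $f = P_1^{e_1}\cdots P_k^{e_k}$ with $P_i$ distinct monic irreducible polynomials, $a(f)$ depends only on the data $(\deg P_1, e_1; \dots; \deg P_k, e_k)$. For $(z_1,\dots,z_n) \in \overline{\mathbb{F}}_q^{\,n}$ and $\sigma \in S_n$, $\delta_\sigma(z_1,\dots,z_n) = 1$ if $\mathrm{Frob}_q(z_1,\dots,z_n) = \sigma(z_1,\dots,z_n)$ (Frobenius $z\mapsto z^q$ applied coordinatewise equals the permutation $\sigma$ of coordinates) and $0$ otherwise. A function $\varphi$ is of von Mangoldt type if there are real coefficients $(c_\sigma)_{\sigma \in S_n}$ with $\varphi(f) = \sum_{(z_1,\dots,z_n) \in \overline{\mathbb{F}}_q^{\,n},\, f = \prod_i (x - z_i)} \sum_{\sigma \in S_n} c_\sigma \delta_\sigma(z_1,\dots,z_n)$ for all $f$. *)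

theory Defs
  imports "HOL-Algebra.Algebraic_Closure_Type" "HOL-Library.FuncSet"
    "HOL-Combinatorics.Permutations"
begin

definition monic_polys :: "nat \<Rightarrow> ('k::field) poly set" where
  "monic_polys n = {f. lead_coeff f = 1 \<and> degree f = n}"

definition fact_data :: "('k::field_gcd) poly \<Rightarrow> (nat \<times> nat) multiset" where
  "fact_data f = image_mset (\<lambda>P. (degree P, multiplicity P f)) (mset_set (prime_factors f))"

definition factorization_function :: "nat \<Rightarrow> (('k::field_gcd) poly \<Rightarrow> real) \<Rightarrow> bool" where
  "factorization_function n a \<longleftrightarrow>
     (\<forall>f\<in>monic_polys n. \<forall>g\<in>monic_polys n. fact_data f = fact_data g \<longrightarrow> a f = a g)"

definition root_tuples :: "nat \<Rightarrow> ('k::field) poly \<Rightarrow> (nat \<Rightarrow> 'k alg_closure) set" where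
  "root_tuples n f = {z \<in> {..<n} \<rightarrow>\<^sub>E UNIV. map_poly to_ac f = (\<Prod>i<n. [:- z i, 1:])}"

definition frob_delta :: "nat \<Rightarrow> nat \<Rightarrow> (nat \<Rightarrow> nat) \<Rightarrow> (nat \<Rightarrow> 'K::field) \<Rightarrow> real" where
  "frob_delta q n \<sigma> z = (if \<forall>i<n. z i ^ q = z (\<sigma> i) then 1 else 0)"

definition von_mangoldt_type :: "nat \<Rightarrow> (('k::{finite,field_gcd}) poly \<Rightarrow> real) \<Rightarrow> bool" where
  "von_mangoldt_type n \<phi> \<longleftrightarrow>
     (\<exists>c :: (nat \<Rightarrow> nat) \<Rightarrow> real. \<forall>f\<in>monic_polys n.
        \<phi> f = (\<Sum>z\<in>root_tuples n f. \<Sum>\<sigma>\<in>{\<sigma>. \<sigma> permutes {..<n}}.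
                   c \<sigma> * frob_delta (card (UNIV :: 'k set)) n \<sigma> z))"

end

theory Submission
  imports Defs "Berlekamp_Zassenhaus.Finite_Field" "HOL-Algebra.Sylow"
begin


lemma CHAR_prime_finite: "prime CHAR('k::{finite,field})"
  by (rule prime_CHAR_semidom) (simp add: finite_imp_CHAR_pos)

lemma card_is_CHAR_power: "\<exists>m. CARD('k::{finite,field}) = CHAR('k) ^ m"
proof (rule ccontr)
  define p where "p = CHAR('k)"
  have pp: "prime p" unfolding p_def by (rule CHAR_prime_finite)
  assume "\<not> ?thesis"
  hence "\<not> (\<exists>k. normalize CARD('k) = p ^ k)" by (simp add: p_def)
  from Ex_other_prime_factor[OF _ this pp] obtain r where r: "r \<in> prime_factors CARD('k)" "r \<noteq> p"
    by auto
  have rp: "prime r" and rdvd: "r dvd CARD('k)" using r by auto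
  define G where "G = \<lparr> carrier = (UNIV :: 'k set), monoid.mult = (+), one = (0 :: 'k) \<rparr>"
  interpret group G
  proof (rule groupI)
    fix x assume x: "x \<in> carrier G"
    show "\<exists>y\<in>carrier G. y \<otimes>\<^bsub>G\<^esub> x = \<one>\<^bsub>G\<^esub>"
      by (intro bexI[of _ "-x"]) (auto simp: G_def)
  qed (auto simp: G_def add_ac)
  obtain m where m: "CARD('k) = r ^ 1 * m" using rdvd by auto
  have "Coset.order G = r ^ 1 * m" using m by (simp add: Coset.order_def G_def)
  from sylow_thm[OF rp group_axioms this] obtain H where H: "subgroup H G" "card H = r ^ 1"
    by (auto simp: G_def)
  have "card H \<ge> 2" using H rp prime_ge_2_nat by auto
  then obtain x where x: "x \<in> H" "x \<noteq> 0"
  proof -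
    have "\<not> H \<subseteq> {0}"
    proof
      assume "H \<subseteq> {0}" hence "card H \<le> card {0::'k}" by (intro card_mono) auto
      hence "card H \<le> 1" by simp
      thus False using \<open>card H \<ge> 2\<close> by simp
    qed
    thus ?thesis using that by auto
  qed
  interpret HG: group "G\<lparr>carrier := H\<rparr>" by (rule subgroup_imp_group[OF H(1)])
  have Hadd: "a + b \<in> H" if "a \<in> H" "b \<in> H" for a b
    using subgroup.m_closed[OF H(1) that] by (simp add: G_def)
  have H0: "0 \<in> H" using subgroup.one_closed[OF H(1)] by (simp add: G_def)
  have Hmul: "of_nat k * x \<in> H" for k
    by (induction k) (auto simp: H0 distrib_right intro!: Hadd x)
  define S where "S = (\<lambda>k. of_nat k * x) ` {..<p}"
  have ofp: "of_nat p = (0::'k)" by (simp add: p_def)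
  have Sall: "of_nat k * x \<in> S" for k
  proof -
    have "(of_nat k :: 'k) = of_nat (k mod p)"
      by (metis of_nat_mod_CHAR p_def)
    moreover have "k mod p < p" using pp prime_gt_0_nat by auto
    ultimately show ?thesis unfolding S_def by auto
  qed
  have cardS: "card S = p"
    unfolding S_def
  proof (subst card_image)
    show "inj_on (\<lambda>k. of_nat k * x) {..<p}"
    proof
      fix i j assume ij: "i \<in> {..<p}" "j \<in> {..<p}" "(of_nat i * x :: 'k) = of_nat j * x"
      hence "(of_nat i :: 'k) = of_nat j" using x by simp
      hence "[i = j] (mod p)" by (simp add: p_def of_nat_eq_iff_cong_CHAR)
      thus "i = j" using ij by (simp add: cong_def)
    qed
  qed simp
  have SH: "subgroup S (G\<lparr>carrier := H\<rparr>)"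
  proof (rule HG.subgroupI)
    show "S \<subseteq> carrier (G\<lparr>carrier := H\<rparr>)" using Hmul by (auto simp: S_def)
    show "S \<noteq> {}" using Sall by auto
  next
    fix a assume "a \<in> S"
    then obtain k where a: "a = of_nat k * x" by (auto simp: S_def)
    have minus_a: "- a = of_nat ((p - 1) * k) * x"
    proof -
      have "of_nat ((p - 1) * k) * x + a = of_nat ((p - 1) * k + k) * x"
        by (simp add: a distrib_right)
      also have "(p - 1) * k + k = p * k"
      proof -
        obtain p' where "p = Suc p'" using pp prime_gt_0_nat not0_implies_Suc by blast
        thus ?thesis by simp
      qed
      also have "of_nat (p * k) * x = (0::'k)" by (simp add: ofp)
      finally have "of_nat ((p - 1) * k) * x + a = 0" .
      thus ?thesis by (metis add.commute neg_eq_iff_add_eq_0)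
    qed
    have ainv: "inv\<^bsub>G\<lparr>carrier := H\<rparr>\<^esub> a = - a"
    proof (rule HG.inv_equality)
      show "- a \<otimes>\<^bsub>G\<lparr>carrier := H\<rparr>\<^esub> a = \<one>\<^bsub>G\<lparr>carrier := H\<rparr>\<^esub>" by (simp add: G_def)
      show "a \<in> carrier (G\<lparr>carrier := H\<rparr>)" using Hmul a by simp
      show "- a \<in> carrier (G\<lparr>carrier := H\<rparr>)" using Hmul[of "(p - 1) * k"] minus_a by simp
    qed
    show "inv\<^bsub>G\<lparr>carrier := H\<rparr>\<^esub> a \<in> S" unfolding ainv using minus_a Sall[of "(p - 1) * k"] by simp
  next
    fix a b assume "a \<in> S" "b \<in> S"
    then obtain i j where "a = of_nat i * x" "b = of_nat j * x" by (auto simp: S_def)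
    hence "a \<otimes>\<^bsub>G\<lparr>carrier := H\<rparr>\<^esub> b = of_nat (i + j) * x" by (simp add: G_def distrib_right)
    thus "a \<otimes>\<^bsub>G\<lparr>carrier := H\<rparr>\<^esub> b \<in> S" using Sall[of "i + j"] by simp
  qed
  have "card (rcosets\<^bsub>G\<lparr>carrier := H\<rparr>\<^esub> S) * card S = Coset.order (G\<lparr>carrier := H\<rparr>)"
    by (rule HG.lagrange[OF SH])
  hence "card (rcosets\<^bsub>G\<lparr>carrier := H\<rparr>\<^esub> S) * p = r" using cardS H by (simp add: Coset.order_def)
  hence "p dvd r" by (metis dvd_triv_right)
  hence "p = r" using pp rp primes_dvd_imp_eq by (metis normalize_nat_def id_apply)
  thus False using r by simp
qed


lemma ff_power_card: "(x::'k::{finite,field}) ^ CARD('k) = x"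
proof (cases "x = 0")
  case False
  have "x * (\<Prod>y\<in>UNIV-{0}. x * y) = x * x ^ (card (UNIV :: 'k set) - 1) * \<Prod>(UNIV-{0})"
    by (simp add: prod.distrib mult_ac)
  also have "x * x ^ (card (UNIV :: 'k set) - 1) = x ^ Suc (card (UNIV :: 'k set) - 1)"
    by (subst power_Suc) auto
  also have "Suc (card (UNIV :: 'k set) - 1) = card (UNIV :: 'k set)"
    using finite_UNIV_card_ge_0[where ?'a = 'k] by simp
  also have "(\<Prod>y\<in>UNIV-{0}. x * y) = (\<Prod>y\<in>UNIV-{0}. y)"
    by (rule prod.reindex_bij_witness[of _ "\<lambda>y. y / x" "\<lambda>y. x * y"]) (use False in auto)
  finally show ?thesis
    by simp
qed (use finite_UNIV_card_ge_0[where ?'a = 'k] in auto)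

lemma card_ge2: "CARD('k::{finite,field}) \<ge> 2"
proof -
  have "card {0::'k, 1} \<le> CARD('k)" by (intro card_mono) auto
  thus ?thesis by simp
qed

lemma frob_add: "((x::'k::{finite,field} alg_closure) + y) ^ CARD('k) = x ^ CARD('k) + y ^ CARD('k)"
proof -
  obtain m where m: "CARD('k) = CHAR('k) ^ m" using card_is_CHAR_power by blast
  have "prime CHAR('k alg_closure)" using CHAR_prime_finite[where 'k='k] by simp
  moreover have "CARD('k) = CHAR('k alg_closure) ^ m" using m by simp
  ultimately show ?thesis by (rule freshmans_dream')
qed

lemma frob_sum: "(sum (f :: 'a \<Rightarrow> 'k::{finite,field} alg_closure) A) ^ CARD('k) = (\<Sum>i\<in>A. f i ^ CARD('k))"
proof -
  obtain m where m: "CARD('k) = CHAR('k) ^ m" using card_is_CHAR_power by blast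
  have "prime CHAR('k alg_closure)" using CHAR_prime_finite[where 'k='k] by simp
  moreover have "CARD('k) = CHAR('k alg_closure) ^ m" using m by simp
  ultimately show ?thesis by (rule freshmans_dream_sum')
qed

lemma frob_to_ac: "(to_ac (a::'k::{finite,field})) ^ CARD('k) = to_ac a"
  by (metis to_ac_power ff_power_card)

lemma poly_frob: "poly (map_poly to_ac P) ((z::'k::{finite,field} alg_closure) ^ CARD('k)) = (poly (map_poly to_ac P) z) ^ CARD('k)"
proof -
  have "(poly (map_poly to_ac P) z) ^ CARD('k) = (\<Sum>i\<le>degree (map_poly to_ac P). (coeff (map_poly to_ac P) i * z ^ i) ^ CARD('k))"
    unfolding poly_altdef by (rule frob_sum)
  also have "\<dots> = (\<Sum>i\<le>degree (map_poly to_ac P). coeff (map_poly to_ac P) i * (z ^ CARD('k)) ^ i)"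
    by (intro sum.cong refl) (simp add: coeff_map_poly power_mult_distrib frob_to_ac flip: power_mult mult.commute)
  finally show ?thesis by (simp add: poly_altdef)
qed

lemma frob_diff: "((x::'k::{finite,field} alg_closure) - y) ^ CARD('k) = x ^ CARD('k) - y ^ CARD('k)"
  using frob_add[of "x - y" y] by (simp add: algebra_simps)

lemma frob_inj: "(x::'k::{finite,field} alg_closure) ^ CARD('k) = y ^ CARD('k) \<Longrightarrow> x = y"
  using frob_diff[of x y] by simp

lemma frob_iter_inj: "(x::'k::{finite,field} alg_closure) ^ (CARD('k) ^ k) = y ^ (CARD('k) ^ k) \<Longrightarrow> x = y"
proof (induction k arbitrary: x y)
  case (Suc k)
  have "(x ^ CARD('k)) ^ (CARD('k) ^ k) = (y ^ CARD('k)) ^ (CARD('k) ^ k)"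
    using Suc.prems by (simp add: power_mult)
  hence "x ^ CARD('k) = y ^ CARD('k)" by (rule Suc.IH)
  thus ?case by (rule frob_inj)
qed simp

lemma fixed_in_range: assumes "(w::'k::{finite,field} alg_closure) ^ CARD('k) = w"
  shows "w \<in> range to_ac"
proof -
  define Q :: "'k alg_closure poly" where "Q = monom 1 CARD('k) - [:0,1:]"
  have q2: "CARD('k) \<ge> 2" by (rule card_ge2)
  have "coeff [:0,1::'k alg_closure:] CARD('k) = 0" using q2 by (intro coeff_eq_0) auto
  hence cQ: "coeff Q CARD('k) = 1" by (simp add: Q_def coeff_monom)
  hence Q0: "Q \<noteq> 0" by auto
  have degQ: "degree Q \<le> CARD('k)" unfolding Q_def
    by (rule order.trans[OF degree_diff_le_max]) (use q2 in \<open>auto simp: degree_monom_eq degree_pCons_eq_if\<close>)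
  have rootQ: "poly Q x = 0 \<longleftrightarrow> x ^ CARD('k) = x" for x
    by (simp add: Q_def poly_monom)
  define R where "R = {x. poly Q x = 0}"
  have finR: "finite R" unfolding R_def using poly_roots_finite[OF Q0] .
  have cR: "card R \<le> CARD('k)" unfolding R_def using card_poly_roots_bound[OF Q0] degQ by linarith
  have sub: "range to_ac \<subseteq> R" by (auto simp: R_def rootQ frob_to_ac)
  have cr: "card (range (to_ac :: 'k \<Rightarrow> _)) = CARD('k)"
    by (rule card_image) (simp add: inj_to_ac)
  have "range to_ac = R"
    using card_subset_eq[OF finR sub] cR cr card_mono[OF finR sub] by linarith
  thus ?thesis using assms by (auto simp: R_def rootQ)
qed


interpretation to_ac_hom: field_hom "to_ac::'k::field \<Rightarrow> 'k alg_closure"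
  by unfold_locales auto
interpretation to_ac_poly: map_poly_inj_idom_divide_hom "to_ac::'k::field \<Rightarrow> 'k alg_closure" ..

lemma prod_distinct_roots_dvd:
  fixes w :: "'b \<Rightarrow> 'a::idom"
  assumes "finite A" "inj_on w A" "\<And>a. a \<in> A \<Longrightarrow> poly p (w a) = 0"
  shows "(\<Prod>a\<in>A. [:- w a, 1:]) dvd p"
  using assms
proof (induction A arbitrary: p rule: finite_induct)
  case (insert b A)
  have "(\<Prod>a\<in>A. [:- w a, 1:]) dvd p" using insert by (auto simp: inj_on_insert)
  then obtain r where r: "p = (\<Prod>a\<in>A. [:- w a, 1:]) * r" by (elim dvdE)
  have "poly p (w b) = 0" using insert by auto
  moreover have "poly (\<Prod>a\<in>A. [:- w a, 1:]) (w b) \<noteq> 0"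
    using insert.prems(1) insert.hyps(1,2) by (auto simp: poly_prod inj_on_insert prod_zero_iff)
  ultimately have "poly r (w b) = 0" using r by simp
  hence "[:- w b, 1:] dvd r" using poly_eq_0_iff_dvd by blast
  hence "[:- w b, 1:] * (\<Prod>a\<in>A. [:- w a, 1:]) dvd r * (\<Prod>a\<in>A. [:- w a, 1:])"
    by (rule mult_dvd_mono) simp
  hence "[:- w b, 1:] * (\<Prod>a\<in>A. [:- w a, 1:]) dvd p" using r by (simp only: mult.commute)
  thus ?case using insert.hyps by simp
qed simp

lemma degree_prod_linear: "degree (\<Prod>a\<in>(A::'b set). [:- w a, 1::'a::idom:]) = card A"
proof (cases "finite A")
  case True thus ?thesis by (subst degree_prod_sum_eq) auto
qed simp

lemma monic_prod_linear: "lead_coeff (\<Prod>a\<in>(A::'b set). [:- w a, 1::'a::idom:]) = 1"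
  by (simp add: lead_coeff_prod)

lemma frob_pow_Suc: "(z::'a::comm_semiring_1) ^ (q ^ Suc k) = (z ^ (q ^ k)) ^ q"
  by (simp only: power_Suc2 power_mult)

lemma frob_pow_add: "(z::'a::comm_semiring_1) ^ (q ^ (a + b)) = (z ^ (q ^ a)) ^ (q ^ b)"
  by (simp add: power_mult power_add)

lemma roots_iter:
  fixes P :: "'k::{finite,field} poly" and z :: "'k alg_closure"
  assumes "poly (map_poly to_ac P) z = 0"
  shows "poly (map_poly to_ac P) (z ^ (CARD('k) ^ k)) = 0"
proof (induction k)
  case 0 thus ?case using assms by simp
next
  case (Suc k)
  have "poly (map_poly to_ac P) (z ^ (CARD('k) ^ Suc k)) = (poly (map_poly to_ac P) (z ^ (CARD('k) ^ k))) ^ CARD('k)"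
    by (simp only: frob_pow_Suc poly_frob)
  thus ?case using Suc.IH card_ge2[where 'k='k] by simp
qed

lemma period_exists:
  fixes P :: "'k::{finite,field} poly" and z :: "'k alg_closure"
  assumes "P \<noteq> 0" "poly (map_poly to_ac P) z = 0"
  shows "\<exists>k>0. z ^ (CARD('k) ^ k) = z"
proof -
  define R where "R = {x. poly (map_poly to_ac P) x = 0}"
  have "map_poly to_ac P \<noteq> 0" using assms(1) by simp
  hence finR: "finite R" unfolding R_def by (rule poly_roots_finite)
  have "range (\<lambda>k. z ^ (CARD('k) ^ k)) \<subseteq> R" using roots_iter[OF assms(2)] by (auto simp: R_def)
  hence "finite (range (\<lambda>k. z ^ (CARD('k) ^ k)))" using finR finite_subset by blast
  hence "\<not> inj (\<lambda>k. z ^ (CARD('k) ^ k))" using finite_imageD infinite_UNIV_nat by blast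
  then obtain a b where ab: "a \<noteq> b" "z ^ (CARD('k) ^ a) = z ^ (CARD('k) ^ b)"
    unfolding inj_def by blast
  have *: "\<exists>k>0. z ^ (CARD('k) ^ k) = z" if "a < b" "z ^ (CARD('k) ^ a) = z ^ (CARD('k) ^ b)" for a b
  proof -
    have "z ^ (CARD('k) ^ (b - a + a)) = (z ^ (CARD('k) ^ (b - a))) ^ (CARD('k) ^ a)"
      by (rule frob_pow_add)
    hence "z ^ (CARD('k) ^ a) = (z ^ (CARD('k) ^ (b - a))) ^ (CARD('k) ^ a)"
      using that by simp
    hence "z = z ^ (CARD('k) ^ (b - a))" by (rule frob_iter_inj)
    thus ?thesis using that by (intro exI[of _ "b - a"]) auto
  qed
  show ?thesis
  proof (cases "a < b")
    case True thus ?thesis using * ab by blast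
  next
    case False thus ?thesis using *[of b a] ab by simp
  qed
qed


lemma minpoly:
  fixes P :: "'k::{finite,field} poly" and z :: "'k alg_closure"
  assumes irr: "irreducible P" and mon: "lead_coeff P = 1" and root: "poly (map_poly to_ac P) z = 0"
  shows "(LEAST k. k > 0 \<and> z ^ (CARD('k) ^ k) = z) = degree P"
    and "inj_on (\<lambda>j. z ^ (CARD('k) ^ j)) {..<degree P}"
    and "map_poly to_ac P = (\<Prod>j<degree P. [:- (z ^ (CARD('k) ^ j)), 1:])"
proof -
  define q where "q = CARD('k)"
  have q2: "q \<ge> 2" unfolding q_def by (rule card_ge2)
  have P0: "P \<noteq> 0" using mon by auto
  define m where "m = (LEAST k. k > 0 \<and> z ^ (q ^ k) = z)"
  have ex: "\<exists>k. k > 0 \<and> z ^ (q ^ k) = z" using period_exists[OF P0 root] unfolding q_def by blast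
  have m: "m > 0" "z ^ (q ^ m) = z" using LeastI_ex[OF ex] unfolding m_def by auto
  have mmin: "z ^ (q ^ k) \<noteq> z" if "0 < k" "k < m" for k
    using not_less_Least[of k "\<lambda>k. k > 0 \<and> z ^ (q ^ k) = z"] that unfolding m_def by auto
  have inj: "inj_on (\<lambda>j. z ^ (q ^ j)) {..<m}"
  proof
    fix i j assume ij: "i \<in> {..<m}" "j \<in> {..<m}" "z ^ (q ^ i) = z ^ (q ^ j)"
    have *: False if "a < b" "b < m" "z ^ (q ^ a) = z ^ (q ^ b)" for a b
    proof -
      have "z ^ (q ^ (b - a + a)) = (z ^ (q ^ (b - a))) ^ (q ^ a)" by (rule frob_pow_add)
      hence "z ^ (q ^ a) = (z ^ (q ^ (b - a))) ^ (q ^ a)" using that by simp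
      hence "z = z ^ (q ^ (b - a))" unfolding q_def by (rule frob_iter_inj)
      moreover have "0 < b - a" "b - a < m" using that by auto
      ultimately show False using mmin[of "b - a"] by simp
    qed
    show "i = j"
    proof (rule ccontr)
      assume "i \<noteq> j"
      thus False using *[of i j] *[of j i] ij by (cases "i < j") auto
    qed
  qed
  define g :: "'k alg_closure poly" where "g = (\<Prod>j<m. [:- (z ^ (q ^ j)), 1:])"
  define fr :: "'k alg_closure \<Rightarrow> 'k alg_closure" where "fr = (\<lambda>x. x ^ q)"
  interpret fr: comm_ring_hom fr
    by unfold_locales (auto simp: fr_def q_def frob_add power_mult_distrib)
  interpret frp: map_poly_comm_ring_hom fr ..
  have "map_poly fr g = (\<Prod>j<m. map_poly fr [:- (z ^ (q ^ j)), 1:])"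
    unfolding g_def by (rule frp.hom_prod)
  also have "\<dots> = (\<Prod>j<m. [:- (z ^ (q ^ Suc j)), 1:])"
  proof (intro prod.cong refl)
    fix j
    have "fr (- (z ^ (q ^ j))) = - (z ^ (q ^ Suc j))"
      by (subst fr.hom_uminus) (simp only: fr_def frob_pow_Suc)
    moreover have "fr 1 = 1" by simp
    moreover have "fr 0 = 0" by simp
    ultimately show "map_poly fr [:- (z ^ (q ^ j)), 1:] = [:- (z ^ (q ^ Suc j)), 1:]"
      by (simp add: map_poly_pCons)
  qed
  also have "\<dots> = g"
  proof -
    obtain m' where m': "m = Suc m'" using m(1) not0_implies_Suc by blast
    have "(\<Prod>j<m. [:- (z ^ (q ^ Suc j)), 1:]) = (\<Prod>j<m'. [:- (z ^ (q ^ Suc j)), 1:]) * [:- (z ^ (q ^ m)), 1:]"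
      unfolding m' by (rule prod.lessThan_Suc)
    also have "\<dots> = [:- z, 1:] * (\<Prod>j<m'. [:- (z ^ (q ^ Suc j)), 1:])" using m(2) by (simp add: mult.commute)
    also have "\<dots> = g" unfolding g_def m' by (subst prod.lessThan_Suc_shift) simp
    finally show ?thesis .
  qed
  finally have gfix: "map_poly fr g = g" .
  have coeff_fix: "coeff g i ^ CARD('k) = coeff g i" for i
  proof -
    have "coeff (map_poly fr g) i = fr (coeff g i)" by (rule coeff_map_poly) (use q2 in \<open>simp add: fr_def\<close>)
    thus ?thesis using gfix by (simp add: fr_def q_def)
  qed
  define g0 where "g0 = map_poly of_ac g"
  have gg0: "map_poly to_ac g0 = g"
    by (rule poly_eqI) (auto simp: coeff_map_poly g0_def intro!: to_ac_of_ac fixed_in_range coeff_fix)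
  have MP0: "map_poly to_ac P \<noteq> 0" using P0 by simp
  have "g dvd map_poly to_ac P"
    unfolding g_def
    by (rule prod_distinct_roots_dvd) (use inj roots_iter[OF root] in \<open>auto simp: q_def\<close>)
  hence "g0 dvd P" unfolding gg0[symmetric] by (rule to_ac_hom.dvd_map_poly_hom_imp_dvd)
  then obtain h where h: "P = g0 * h" by (elim dvdE)
  have degg: "degree g = m" unfolding g_def by (simp add: degree_prod_linear)
  have degg0: "degree g0 = m" using degg gg0 by (metis to_ac_hom.degree_map_poly_hom)
  have "\<not> is_unit g0" using degg0 m(1) by (auto simp: is_unit_iff_degree)
  hence hu: "is_unit h" using irreducibleD[OF irr h] by blast
  then obtain c where c: "h = [:c:]" "c dvd 1" by (rule is_unit_polyE)
  hence c0: "c \<noteq> 0" by auto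
  have degP: "degree P = m" using h c c0 degg0 by simp
  have lcg0: "lead_coeff g0 = 1"
  proof -
    have "to_ac (lead_coeff g0) = lead_coeff g" using gg0 by (metis to_ac_hom.hom_lead_coeff)
    also have "\<dots> = 1" unfolding g_def by (rule monic_prod_linear)
    finally show ?thesis by simp
  qed
  have "c = 1" using mon h c c0 lcg0 by (simp add: lead_coeff_mult)
  hence "P = g0" using h c by simp
  hence "map_poly to_ac P = g" using gg0 by simp
  thus "map_poly to_ac P = (\<Prod>j<degree P. [:- (z ^ (CARD('k) ^ j)), 1:])"
    using degP by (simp add: g_def q_def)
  show "(LEAST k. k > 0 \<and> z ^ (CARD('k) ^ k) = z) = degree P" using degP m_def q_def by simp
  show "inj_on (\<lambda>j. z ^ (CARD('k) ^ j)) {..<degree P}" using inj degP q_def by simp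
qed


lemma order_prod:
  assumes "finite A" "\<And>i. i \<in> A \<Longrightarrow> f i \<noteq> (0::'a::idom poly)"
  shows "order x (\<Prod>i\<in>A. f i) = (\<Sum>i\<in>A. order x (f i))"
  using assms
proof (induction A rule: finite_induct)
  case (insert b A)
  have "(\<Prod>i\<in>A. f i) \<noteq> 0" using insert by (simp add: prod_zero_iff)
  hence "order x (f b * (\<Prod>i\<in>A. f i)) = order x (f b) + order x (\<Prod>i\<in>A. f i)"
    using insert by (intro order_mult) simp
  thus ?case using insert by simp
qed simp

lemma order_linear: "order x [:- a, 1::'a::idom:] = (if a = x then 1 else 0)"
proof (cases "a = x")
  case True thus ?thesis using order_power_n_n[of x 1] by simp
next
  case False
  hence "poly [:- a, 1::'a:] x \<noteq> 0" by simp
  hence "order x [:- a, 1::'a:] = 0" by (rule order_0I)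
  thus ?thesis using False by simp
qed

lemma order_prod_linear:
  assumes "finite A"
  shows "order x (\<Prod>i\<in>A. [:- w i, 1::'a::idom:]) = card {i\<in>A. w i = x}"
proof -
  have "order x (\<Prod>i\<in>A. [:- w i, 1::'a::idom:]) = (\<Sum>i\<in>A. order x [:- w i, 1::'a::idom:])"
    using assms by (intro order_prod) auto
  also have "\<dots> = (\<Sum>i\<in>A. if w i = x then 1 else 0)" by (simp add: order_linear)
  also have "\<dots> = card {i\<in>A. w i = x}" using assms by (simp add: sum.If_cases Int_def)
  finally show ?thesis .
qed

lemma perm_from:
  fixes n :: nat
  assumes injz: "inj_on z {..<n}" and injw: "inj_on w {..<n}"
    and ex: "\<And>i. i < n \<Longrightarrow> \<exists>j<n. w i = z j"
  shows "\<exists>\<pi>. \<pi> permutes {..<n} \<and> (\<forall>i<n. z (\<pi> i) = w i)"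
proof -
  define \<pi> where "\<pi> = (\<lambda>i. if i < n then (THE j. j < n \<and> w i = z j) else i)"
  have pi: "\<pi> i < n \<and> w i = z (\<pi> i)" if i: "i < n" for i
  proof -
    obtain j where j: "j < n" "w i = z j" using ex[OF i] by blast
    have "(THE j. j < n \<and> w i = z j) = j"
      by (rule the_equality) (use j injz in \<open>auto simp: inj_on_def\<close>)
    thus ?thesis using j i by (simp add: \<pi>_def)
  qed
  have inj: "inj_on \<pi> {..<n}"
  proof
    fix i j assume "i \<in> {..<n}" "j \<in> {..<n}" "\<pi> i = \<pi> j"
    hence "w i = w j" using pi by (metis lessThan_iff)
    thus "i = j" using injw \<open>i \<in> {..<n}\<close> \<open>j \<in> {..<n}\<close> by (auto simp: inj_on_def)
  qed
  have sub: "\<pi> ` {..<n} \<subseteq> {..<n}" using pi by auto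
  have "\<pi> ` {..<n} = {..<n}"
    by (rule card_subset_eq) (use sub card_image[OF inj] in simp_all)
  hence "bij_betw \<pi> {..<n} {..<n}" using inj by (simp add: bij_betw_def)
  hence "\<pi> permutes {..<n}" by (rule bij_imp_permutes) (simp add: \<pi>_def)
  thus ?thesis using pi by metis
qed

lemma prod_nth_list: "(\<Prod>i<length xs. g (xs ! i)) = prod_list (map g xs)"
proof (induction xs)
  case (Cons x xs)
  have "(\<Prod>i<length (x # xs). g ((x # xs) ! i)) = g x * (\<Prod>i<length xs. g (xs ! i))"
    by (simp only: length_Cons prod.lessThan_Suc_shift) simp
  thus ?case using Cons by simp
qed simp


lemma normalized_poly_monic:
  fixes p :: "'k::field_gcd poly"
  assumes "normalize p = p" "p \<noteq> 0"
  shows "lead_coeff p = 1"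
proof -
  have "unit_factor p * normalize p = p" by (rule unit_factor_mult_normalize)
  hence "unit_factor p * p = p * 1" using assms(1) by simp
  hence uf: "unit_factor p = 1" using assms(2) by (metis mult.commute mult_left_cancel)
  have "is_unit (lead_coeff p)" using assms(2) by (simp add: dvd_field_iff)
  hence "unit_factor (lead_coeff p) = lead_coeff p" by (rule is_unit_unit_factor)
  moreover have "[:unit_factor (lead_coeff p):] = (1 :: 'k poly)" using uf by (simp add: unit_factor_poly_def)
  ultimately have "[:lead_coeff p:] = [:1:]" by (simp add: one_pCons)
  thus ?thesis by simp
qed

lemma monic_normalize:
  fixes p :: "'k::field_gcd poly"
  assumes "lead_coeff p = 1"
  shows "normalize p = p"
  using assms by (simp add: normalize_poly_eq_map_poly map_poly_idI)

lemma prime_factor_props: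
  fixes f P :: "'k::field_gcd poly"
  assumes "P \<in> prime_factors f"
  shows "lead_coeff P = 1" "irreducible P" "degree P > 0" "P dvd f"
proof -
  have pr: "prime P" using assms by auto
  show "lead_coeff P = 1"
    by (rule normalized_poly_monic) (use pr in \<open>auto simp: normalize_prime\<close>)
  show "irreducible P" using pr by (simp add: prime_elem_imp_irreducible)
  have "\<not> is_unit P" "P \<noteq> 0" using pr by (auto simp: prime_def prime_elem_def)
  thus "degree P > 0" using is_unit_iff_degree by auto
  show "P dvd f" using assms by (simp add: in_prime_factors_iff)
qed

lemma squarefree_monic_prod:
  fixes f :: "'k::field_gcd poly"
  assumes "lead_coeff f = 1" "squarefree f"
  shows "f = (\<Prod>P\<in>prime_factors f. P)"
proof -
  have f0: "f \<noteq> 0" using assms by auto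
  have "(\<Prod>P\<in>prime_factors f. P ^ multiplicity P f) = normalize f" by (rule prod_prime_factors[OF f0])
  also have "\<dots> = f" using assms(1) by (rule monic_normalize)
  finally show ?thesis using assms(2) f0 by (simp add: squarefree_factorial_semiring')
qed

lemma prime_factors_coprime_root:
  fixes f P Q :: "'k::field_gcd poly" and x :: "'k alg_closure"
  assumes "P \<in> prime_factors f" "Q \<in> prime_factors f" "P \<noteq> Q"
    "poly (map_poly to_ac P) x = 0" "poly (map_poly to_ac Q) x = 0"
  shows False
proof -
  have "coprime P Q" using assms by (intro primes_coprime) auto
  hence "gcd P Q = 1" by simp
  then obtain u v where uv: "u * P + v * Q = 1"
    using bezout_coefficients_fst_snd[of P Q] by metis
  hence "map_poly to_ac (u * P + v * Q) = 1" by simp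
  hence "poly (map_poly to_ac (u * P + v * Q)) x = 1" by simp
  moreover have "poly (map_poly to_ac (u * P + v * Q)) x = 0"
    using assms(4,5) by (simp add: to_ac_poly.hom_add to_ac_poly.hom_mult)
  ultimately show False by simp
qed


lemma card_le1: "finite A \<Longrightarrow> (\<And>a b. a \<in> A \<Longrightarrow> b \<in> A \<Longrightarrow> a = b) \<Longrightarrow> card A \<le> 1"
  using card_le_Suc0_iff_eq[of A] by auto

lemma RT_mem: "z \<in> root_tuples n f \<longleftrightarrow> z \<in> {..<n} \<rightarrow>\<^sub>E UNIV \<and> map_poly to_ac f = (\<Prod>i<n. [:- z i, 1:])"
  by (simp add: root_tuples_def)

lemma RT_roots:
  assumes "z \<in> root_tuples n f"
  shows "poly (map_poly to_ac f) x = 0 \<longleftrightarrow> (\<exists>i<n. x = z i)"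
  using assms by (auto simp: RT_mem poly_prod prod_zero_iff)

lemma map_prod_factors:
  fixes f :: "'k::field_gcd poly"
  assumes "lead_coeff f = 1" "squarefree f"
  shows "map_poly to_ac f = (\<Prod>P\<in>prime_factors f. map_poly to_ac P)"
proof -
  have "map_poly to_ac f = map_poly to_ac (\<Prod>P\<in>prime_factors f. P)"
    using squarefree_monic_prod[OF assms] by simp
  also have "\<dots> = (\<Prod>P\<in>prime_factors f. map_poly to_ac P)" by (rule to_ac_poly.hom_prod)
  finally show ?thesis .
qed

lemma order_map_factor:
  fixes P :: "'k::{finite,field_gcd} poly"
  assumes "P \<in> prime_factors f"
  shows "order x (map_poly to_ac P) \<le> 1"
proof (cases "poly (map_poly to_ac P) x = 0")
  case True
  note pf = prime_factor_props[OF assms]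
  have e: "map_poly to_ac P = (\<Prod>j<degree P. [:- (x ^ (CARD('k) ^ j)), 1:])"
    and inj: "inj_on (\<lambda>j. x ^ (CARD('k) ^ j)) {..<degree P}"
    using minpoly[OF pf(2) pf(1) True] by auto
  have "order x (map_poly to_ac P) = card {j\<in>{..<degree P}. x ^ (CARD('k) ^ j) = x}"
    unfolding e by (rule order_prod_linear) simp
  also have "\<dots> \<le> 1"
  proof -
    show ?thesis by (rule card_le1) (use inj in \<open>auto simp: inj_on_def\<close>)
  qed
  finally show ?thesis .
next
  case False
  hence "order x (map_poly to_ac P) = 0" by (rule order_0I)
  thus ?thesis by simp
qed

lemma order_map_le1:
  fixes f :: "'k::{finite,field_gcd} poly"
  assumes "lead_coeff f = 1" "squarefree f"
  shows "order x (map_poly to_ac f) \<le> 1"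
proof -
  define S where "S = {P\<in>prime_factors f. poly (map_poly to_ac P) x = 0}"
  have nz: "map_poly to_ac P \<noteq> 0" if "P \<in> prime_factors f" for P
    using that by auto
  have "order x (map_poly to_ac f) = (\<Sum>P\<in>prime_factors f. order x (map_poly to_ac P))"
    unfolding map_prod_factors[OF assms] by (rule order_prod) (use nz in auto)
  also have "\<dots> = (\<Sum>P\<in>S. order x (map_poly to_ac P))"
    by (rule sum.mono_neutral_right) (auto simp: S_def order_0I)
  also have "\<dots> \<le> (\<Sum>P\<in>S. 1)"
  proof (rule sum_mono)
    fix P assume "P \<in> S"
    hence "P \<in> prime_factors f" by (simp add: S_def)
    thus "order x (map_poly to_ac P) \<le> 1" by (rule order_map_factor)
  qed
  also have "\<dots> \<le> 1"
  proof -
    have "card S \<le> 1"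
    proof (rule card_le1)
      show "finite S" by (simp add: S_def)
      fix a b assume "a \<in> S" "b \<in> S"
      thus "a = b" using prime_factors_coprime_root[of a f b x] by (auto simp: S_def)
    qed
    thus ?thesis by simp
  qed
  finally show ?thesis .
qed

lemma RT_inj:
  fixes f :: "'k::{finite,field_gcd} poly"
  assumes "lead_coeff f = 1" "squarefree f" "z \<in> root_tuples n f"
  shows "inj_on z {..<n}"
proof
  fix i j assume ij: "i \<in> {..<n}" "j \<in> {..<n}" "z i = z j"
  have mf: "map_poly to_ac f = (\<Prod>i<n. [:- z i, 1:])" using assms(3) by (simp add: RT_mem)
  have "order (z i) (map_poly to_ac f) = card {k\<in>{..<n}. z k = z i}"
    unfolding mf by (rule order_prod_linear) simp
  hence c1: "card {k\<in>{..<n}. z k = z i} \<le> 1" using order_map_le1[OF assms(1,2), of "z i"] by simp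
  have "{i, j} \<subseteq> {k\<in>{..<n}. z k = z i}" using ij by auto
  hence "card {i, j} \<le> card {k\<in>{..<n}. z k = z i}" by (intro card_mono) auto
  thus "i = j" using c1 by (cases "i = j") auto
qed

lemma RT_nonempty:
  fixes f :: "'k::field poly"
  assumes "lead_coeff f = 1" "degree f = n"
  shows "\<exists>z. z \<in> root_tuples n f"
proof -
  have mf0: "map_poly to_ac f \<noteq> 0" using assms by auto
  obtain A where A: "size A = degree (map_poly to_ac f)"
    "map_poly to_ac f = smult (lead_coeff (map_poly to_ac f)) (\<Prod>x\<in>#A. [:-x, 1:])"
    using alg_closed_imp_factorization[OF mf0] by blast
  have dm: "degree (map_poly to_ac f) = n" using assms by simp
  have lm: "lead_coeff (map_poly to_ac f) = 1" using assms by simp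
  obtain xs where xs: "mset xs = A" using ex_mset by blast
  have len: "length xs = n" using A(1) dm xs by auto
  define z where "z = (\<lambda>i. if i < n then xs ! i else undefined)"
  have "(\<Prod>i<n. [:- z i, 1:]) = (\<Prod>i<length xs. [:- (xs ! i), 1:])" using len by (simp add: z_def)
  also have "\<dots> = prod_list (map (\<lambda>x. [:- x, 1:]) xs)" by (rule prod_nth_list)
  also have "\<dots> = (\<Prod>x\<in>#A. [:-x, 1:])" by (simp flip: xs prod_mset_prod_list)
  also have "\<dots> = map_poly to_ac f" using A(2) unfolding lm by simp
  finally have "map_poly to_ac f = (\<Prod>i<n. [:- z i, 1:])" by simp
  moreover have "z \<in> {..<n} \<rightarrow>\<^sub>E UNIV" by (simp add: z_def PiE_def extensional_def)
  ultimately show ?thesis by (auto simp: RT_mem)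
qed


lemma perm_lt: "\<sigma> permutes {..<(n::nat)} \<Longrightarrow> i < n \<Longrightarrow> \<sigma> i < n"
  using permutes_in_image[of \<sigma> "{..<n}" i] by simp

lemma card_RT:
  fixes f :: "'k::{finite,field_gcd} poly"
  assumes "lead_coeff f = 1" "degree f = n" "squarefree f"
  shows "card (root_tuples n f) = fact n"
proof -
  obtain z0 where z0: "z0 \<in> root_tuples n f" using RT_nonempty[OF assms(1,2)] by blast
  have inj0: "inj_on z0 {..<n}" by (rule RT_inj[OF assms(1,3) z0])
  have mf: "map_poly to_ac f = (\<Prod>i<n. [:- z0 i, 1:])" using z0 by (simp add: RT_mem)
  define \<Phi> where "\<Phi> = (\<lambda>\<pi> i. if i < n then z0 (\<pi> i) else undefined)"
  have "bij_betw \<Phi> {\<pi>. \<pi> permutes {..<n}} (root_tuples n f)"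
    unfolding bij_betw_def
  proof (intro conjI)
    show "inj_on \<Phi> {\<pi>. \<pi> permutes {..<n}}"
    proof
      fix \<pi> \<pi>' assume p: "\<pi> \<in> {\<pi>. \<pi> permutes {..<n}}" "\<pi>' \<in> {\<pi>. \<pi> permutes {..<n}}" "\<Phi> \<pi> = \<Phi> \<pi>'"
      show "\<pi> = \<pi>'"
      proof
        fix i show "\<pi> i = \<pi>' i"
        proof (cases "i < n")
          case True
          have "z0 (\<pi> i) = z0 (\<pi>' i)" using fun_cong[OF p(3), of i] True by (simp add: \<Phi>_def)
          moreover have "\<pi> i \<in> {..<n}" "\<pi>' i \<in> {..<n}" using perm_lt[OF p(1)[simplified] True] perm_lt[OF p(2)[simplified] True] by auto
          ultimately show ?thesis using inj0 by (auto simp: inj_on_def)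
        next
          case False thus ?thesis using p by (simp add: permutes_not_in)
        qed
      qed
    qed
    show "\<Phi> ` {\<pi>. \<pi> permutes {..<n}} = root_tuples n f"
    proof
      show "\<Phi> ` {\<pi>. \<pi> permutes {..<n}} \<subseteq> root_tuples n f"
      proof
        fix z assume "z \<in> \<Phi> ` {\<pi>. \<pi> permutes {..<n}}"
        then obtain \<pi> where p: "\<pi> permutes {..<n}" "z = \<Phi> \<pi>" by auto
        have "(\<Prod>i<n. [:- z0 i, 1:]) = (\<Prod>i<n. [:- z0 (\<pi> i), 1:])"
          using prod.permute[OF p(1), of "\<lambda>i. [:- z0 i, 1:]"] by (simp add: o_def)
        also have "\<dots> = (\<Prod>i<n. [:- z i, 1:])" by (intro prod.cong) (auto simp: p(2) \<Phi>_def)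
        finally show "z \<in> root_tuples n f" using mf by (auto simp: RT_mem p(2) \<Phi>_def PiE_def extensional_def)
      qed
      show "root_tuples n f \<subseteq> \<Phi> ` {\<pi>. \<pi> permutes {..<n}}"
      proof
        fix z assume z: "z \<in> root_tuples n f"
        have injz: "inj_on z {..<n}" by (rule RT_inj[OF assms(1,3) z])
        have "\<exists>j<n. z i = z0 j" if "i < n" for i
        proof -
          have "poly (map_poly to_ac f) (z i) = 0" using RT_roots[OF z] that by auto
          thus ?thesis using RT_roots[OF z0] by auto
        qed
        then obtain \<pi> where p: "\<pi> permutes {..<n}" "\<forall>i<n. z0 (\<pi> i) = z i"
          using perm_from[OF inj0 injz] by blast
        have "z = \<Phi> \<pi>"
        proof
          fix i show "z i = \<Phi> \<pi> i"
            using p z by (cases "i < n") (auto simp: \<Phi>_def RT_mem PiE_def extensional_def)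
        qed
        thus "z \<in> \<Phi> ` {\<pi>. \<pi> permutes {..<n}}" using p by auto
      qed
    qed
  qed
  hence "card (root_tuples n f) = card {\<pi>. \<pi> permutes {..<n}}" by (simp add: bij_betw_same_card)
  also have "\<dots> = fact n" by (rule card_permutations) auto
  finally show ?thesis .
qed

lemma unique_sigma:
  fixes f :: "'k::{finite,field_gcd} poly"
  assumes "lead_coeff f = 1" "squarefree f" "z \<in> root_tuples n f"
  shows "\<exists>\<sigma>. \<sigma> permutes {..<n} \<and> (\<forall>i<n. z i ^ CARD('k) = z (\<sigma> i)) \<and>
           (\<forall>\<sigma>'. \<sigma>' permutes {..<n} \<and> (\<forall>i<n. z i ^ CARD('k) = z (\<sigma>' i)) \<longrightarrow> \<sigma>' = \<sigma>)"
proof -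
  have injz: "inj_on z {..<n}" by (rule RT_inj[OF assms])
  have injw: "inj_on (\<lambda>i. z i ^ CARD('k)) {..<n}"
    using injz frob_inj by (auto simp: inj_on_def)
  have "\<exists>j<n. z i ^ CARD('k) = z j" if "i < n" for i
  proof -
    have "poly (map_poly to_ac f) (z i) = 0" using RT_roots[OF assms(3)] that by auto
    hence "poly (map_poly to_ac f) (z i ^ CARD('k)) = 0" using card_ge2[where 'k='k] by (simp add: poly_frob)
    thus ?thesis using RT_roots[OF assms(3)] by auto
  qed
  then obtain \<sigma> where s: "\<sigma> permutes {..<n}" "\<forall>i<n. z (\<sigma> i) = z i ^ CARD('k)"
    using perm_from[OF injz injw] by blast
  have uniq: "\<sigma>' = \<sigma>" if "\<sigma>' permutes {..<n}" "\<forall>i<n. z i ^ CARD('k) = z (\<sigma>' i)" for \<sigma>'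
  proof
    fix i show "\<sigma>' i = \<sigma> i"
    proof (cases "i < n")
      case True
      have "z (\<sigma>' i) = z (\<sigma> i)" using that s True by auto
      moreover have "\<sigma> i \<in> {..<n}" "\<sigma>' i \<in> {..<n}" using perm_lt[OF s(1) True] perm_lt[OF that(1) True] by auto
      ultimately show ?thesis using injz by (auto simp: inj_on_def)
    next
      case False thus ?thesis using s that by (simp add: permutes_not_in)
    qed
  qed
  have s2: "\<forall>i<n. z i ^ CARD('k) = z (\<sigma> i)" using s(2) by simp
  show ?thesis using s(1) s2 uniq by blast
qed


definition per :: "(nat \<Rightarrow> nat) \<Rightarrow> nat \<Rightarrow> nat" where
  "per \<sigma> i = (LEAST k. k > 0 \<and> (\<sigma> ^^ k) i = i)"

lemma KL:
  fixes f :: "'k::{finite,field_gcd} poly"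
  assumes mon: "lead_coeff f = 1" and sf: "squarefree f" and z: "z \<in> root_tuples n f"
    and sp: "\<sigma> permutes {..<n}" and pat: "\<forall>i<n. z i ^ CARD('k) = z (\<sigma> i)"
  shows "count (fact_data f) (d, e) = (if e = 1 \<and> d > 0 then card {i\<in>{..<n}. per \<sigma> i = d} div d else 0)"
proof -
  define q where "q = CARD('k)"
  define PF where "PF = prime_factors f"
  have f0: "f \<noteq> 0" using mon by auto
  have injz: "inj_on z {..<n}" by (rule RT_inj[OF mon sf z])
  have iter: "(\<sigma> ^^ k) i < n \<and> z ((\<sigma> ^^ k) i) = z i ^ (q ^ k)" if "i < n" for i k
  proof (induction k)
    case 0 thus ?case using that by simp
  next
    case (Suc k)
    define j where "j = (\<sigma> ^^ k) i"
    have j: "j < n" "z j = z i ^ (q ^ k)" using Suc by (auto simp: j_def)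
    have "(\<sigma> ^^ Suc k) i = \<sigma> j" by (simp add: j_def)
    moreover have "\<sigma> j < n" using j perm_lt[OF sp] by blast
    moreover have "z (\<sigma> j) = z j ^ q" using pat[rule_format, OF j(1)] unfolding q_def by simp
    moreover have "z i ^ (q ^ Suc k) = (z i ^ (q ^ k)) ^ q" by (rule frob_pow_Suc)
    ultimately show ?case using j(2) by simp
  qed
  have per_eq: "per \<sigma> i = (LEAST k. k > 0 \<and> z i ^ (q ^ k) = z i)" if "i < n" for i
  proof -
    have "(\<lambda>k. k > 0 \<and> (\<sigma> ^^ k) i = i) = (\<lambda>k. k > 0 \<and> z i ^ (q ^ k) = z i)"
    proof
      fix k
      have "(\<sigma> ^^ k) i = i \<longleftrightarrow> z ((\<sigma> ^^ k) i) = z i"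
        using injz iter[OF that, of k] that by (auto simp: inj_on_def)
      thus "(k > 0 \<and> (\<sigma> ^^ k) i = i) = (k > 0 \<and> z i ^ (q ^ k) = z i)"
        using iter[OF that, of k] by simp
    qed
    thus ?thesis by (simp add: per_def)
  qed
  define Rt where "Rt P = {i\<in>{..<n}. poly (map_poly to_ac P) (z i) = 0}" for P
  have mfP: "map_poly to_ac f = (\<Prod>P\<in>PF. map_poly to_ac P)" unfolding PF_def by (rule map_prod_factors[OF mon sf])
  have rootf: "poly (map_poly to_ac f) x = 0" if "P \<in> PF" "poly (map_poly to_ac P) x = 0" for P x
    using that by (simp add: mfP poly_prod prod_zero_iff PF_def) (metis)
  have per_Rt: "per \<sigma> i = degree P" if "P \<in> PF" "i \<in> Rt P" for P i
  proof -
    note pf = prime_factor_props[OF that(1)[unfolded PF_def]]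
    have "i < n" "poly (map_poly to_ac P) (z i) = 0" using that by (auto simp: Rt_def)
    thus ?thesis using per_eq minpoly(1)[OF pf(2) pf(1)] by (simp add: q_def)
  qed
  have ex_Rt: "\<exists>P\<in>PF. i \<in> Rt P" if "i < n" for i
  proof -
    have "poly (map_poly to_ac f) (z i) = 0" using RT_roots[OF z] that by auto
    hence "\<exists>P\<in>PF. poly (map_poly to_ac P) (z i) = 0" by (simp add: mfP poly_prod prod_zero_iff PF_def)
    thus ?thesis using that by (auto simp: Rt_def)
  qed
  have uniq_Rt: "P = Q" if "P \<in> PF" "Q \<in> PF" "i \<in> Rt P" "i \<in> Rt Q" for P Q i
    using prime_factors_coprime_root[of P f Q "z i"] that by (auto simp: Rt_def PF_def)
  have card_Rt: "card (Rt P) = degree P" if "P \<in> PF" for P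
  proof -
    note pf = prime_factor_props[OF that[unfolded PF_def]]
    have "degree (map_poly to_ac P) > 0" using pf by simp
    then obtain x0 where x0: "poly (map_poly to_ac P) x0 = 0" using alg_closed_imp_poly_has_root by blast
    define w where "w = (\<lambda>j. x0 ^ (CARD('k) ^ j))"
    have e: "map_poly to_ac P = (\<Prod>j<degree P. [:- w j, 1:])" and injw: "inj_on w {..<degree P}"
      using minpoly[OF pf(2) pf(1) x0] by (auto simp: w_def)
    have RP: "{x. poly (map_poly to_ac P) x = 0} = w ` {..<degree P}"
      by (subst e) (auto simp: poly_prod prod_zero_iff)
    have "z ` Rt P = {x. poly (map_poly to_ac P) x = 0}"
    proof
      show "z ` Rt P \<subseteq> {x. poly (map_poly to_ac P) x = 0}" by (auto simp: Rt_def)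
      show "{x. poly (map_poly to_ac P) x = 0} \<subseteq> z ` Rt P"
      proof
        fix x assume "x \<in> {x. poly (map_poly to_ac P) x = 0}"
        hence x: "poly (map_poly to_ac P) x = 0" by simp
        hence "poly (map_poly to_ac f) x = 0" using rootf that by blast
        then obtain i where "i < n" "x = z i" using RT_roots[OF z] by auto
        thus "x \<in> z ` Rt P" using x by (auto simp: Rt_def)
      qed
    qed
    moreover have "inj_on z (Rt P)" by (rule inj_on_subset[OF injz]) (auto simp: Rt_def)
    ultimately have "card (Rt P) = card {x. poly (map_poly to_ac P) x = 0}"
      using card_image[of z "Rt P"] by simp
    also have "\<dots> = degree P" unfolding RP using card_image[OF injw] by simp
    finally show ?thesis .
  qed
  have finPF: "finite PF" by (simp add: PF_def)
  have dpos: "degree P > 0" if "P \<in> PF" for P using prime_factor_props(3) that by (simp add: PF_def)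
  have set_eq: "{i\<in>{..<n}. per \<sigma> i = d} = (\<Union>P\<in>{P\<in>PF. degree P = d}. Rt P)"
  proof
    show "{i\<in>{..<n}. per \<sigma> i = d} \<subseteq> (\<Union>P\<in>{P\<in>PF. degree P = d}. Rt P)"
    proof
      fix i assume "i \<in> {i\<in>{..<n}. per \<sigma> i = d}"
      hence i: "i < n" "per \<sigma> i = d" by auto
      then obtain P where "P \<in> PF" "i \<in> Rt P" using ex_Rt by blast
      thus "i \<in> (\<Union>P\<in>{P\<in>PF. degree P = d}. Rt P)" using per_Rt i by auto
    qed
    show "(\<Union>P\<in>{P\<in>PF. degree P = d}. Rt P) \<subseteq> {i\<in>{..<n}. per \<sigma> i = d}"
      using per_Rt by (auto simp: Rt_def)
  qed
  have card_eq: "card {i\<in>{..<n}. per \<sigma> i = d} = d * card {P\<in>PF. degree P = d}"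
  proof -
    have "card (\<Union>P\<in>{P\<in>PF. degree P = d}. Rt P) = (\<Sum>P\<in>{P\<in>PF. degree P = d}. card (Rt P))"
    proof (rule card_UN_disjoint)
      show "finite {P\<in>PF. degree P = d}" using finPF by simp
      show "\<forall>P\<in>{P\<in>PF. degree P = d}. finite (Rt P)" by (simp add: Rt_def)
      show "\<forall>P\<in>{P\<in>PF. degree P = d}. \<forall>Q\<in>{P\<in>PF. degree P = d}. P \<noteq> Q \<longrightarrow> Rt P \<inter> Rt Q = {}"
        using uniq_Rt by blast
    qed
    also have "\<dots> = (\<Sum>P\<in>{P\<in>PF. degree P = d}. d)" using card_Rt by (intro sum.cong) auto
    also have "\<dots> = d * card {P\<in>PF. degree P = d}" by simp
    finally show ?thesis using set_eq by simp
  qed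
  have mult1: "multiplicity P f = 1" if "P \<in> PF" for P
    using sf f0 that by (simp add: squarefree_factorial_semiring' PF_def)
  have "count (fact_data f) (d, e) = card {P\<in>PF. (degree P, multiplicity P f) = (d, e)}"
    unfolding fact_data_def PF_def by (rule count_image_mset_eq_card_vimage) simp
  also have "\<dots> = (if e = 1 then card {P\<in>PF. degree P = d} else 0)"
  proof (cases "e = 1")
    case True
    have "{P\<in>PF. (degree P, multiplicity P f) = (d, e)} = {P\<in>PF. degree P = d}"
      using mult1 True by auto
    thus ?thesis using True by simp
  next
    case False
    have "{P\<in>PF. (degree P, multiplicity P f) = (d, e)} = {}"
      using mult1 False by auto
    hence "card {P\<in>PF. (degree P, multiplicity P f) = (d, e)} = 0" by (simp only: card.empty)
    thus ?thesis using False by simp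
  qed
  also have "\<dots> = (if e = 1 \<and> d > 0 then card {i\<in>{..<n}. per \<sigma> i = d} div d else 0)"
  proof (cases "d > 0")
    case True thus ?thesis using card_eq by simp
  next
    case False
    hence "{P\<in>PF. degree P = d} = {}" using dpos by auto
    hence "card {P\<in>PF. degree P = d} = 0" by (simp only: card.empty)
    thus ?thesis using False by simp
  qed
  finally show ?thesis .
qed


lemma fact_data_eq:
  fixes f g :: "'k::{finite,field_gcd} poly"
  assumes "f \<in> monic_polys n" "squarefree f" "z \<in> root_tuples n f"
    and "g \<in> monic_polys n" "squarefree g" "w \<in> root_tuples n g"
    and "\<sigma> permutes {..<n}" "\<forall>i<n. z i ^ CARD('k) = z (\<sigma> i)" "\<forall>i<n. w i ^ CARD('k) = w (\<sigma> i)"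
  shows "fact_data f = fact_data g"
proof (rule multiset_eqI)
  fix x :: "nat \<times> nat"
  obtain d e where x: "x = (d, e)" by (cases x)
  show "count (fact_data f) x = count (fact_data g) x"
  proof -
    have mf: "lead_coeff f = 1" "lead_coeff g = 1" using assms(1,4) by (auto simp: monic_polys_def)
    show ?thesis unfolding x
      using KL[OF mf(1) assms(2,3,7,8), of d e] KL[OF mf(2) assms(5,6,7,9), of d e] by simp
  qed
qed

theorem proposition4p6:
  fixes a :: "('k::{finite,field_gcd}) poly \<Rightarrow> real" and n :: nat
  assumes "n \<ge> 1" and "factorization_function n a"
  shows "\<exists>\<phi>. von_mangoldt_type n \<phi> \<and>
           (\<forall>f\<in>monic_polys n. squarefree f \<longrightarrow> \<phi> f = a f)"
proof -
  define pat where "pat = (\<lambda>(z :: nat \<Rightarrow> 'k alg_closure) \<sigma>. \<forall>i<n. z i ^ CARD('k) = z (\<sigma> i))"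
  define G where "G = (\<lambda>\<sigma>. SOME g. g \<in> monic_polys n \<and> squarefree g \<and> (\<exists>w\<in>root_tuples n g. pat w \<sigma>))"
  define c where "c = (\<lambda>\<sigma>. a (G \<sigma>) / fact n)"
  define \<phi> where "\<phi> = (\<lambda>f :: 'k poly. \<Sum>z\<in>root_tuples n f. \<Sum>\<sigma>\<in>{\<sigma>. \<sigma> permutes {..<n}}.
                   c \<sigma> * frob_delta (card (UNIV :: 'k set)) n \<sigma> z)"
  have vm: "von_mangoldt_type n \<phi>"
    unfolding von_mangoldt_type_def by (rule exI[of _ c]) (simp add: \<phi>_def)
  have agree: "\<phi> f = a f" if f: "f \<in> monic_polys n" "squarefree f" for f
  proof -
    have mon: "lead_coeff f = 1" and deg: "degree f = n" using f by (auto simp: monic_polys_def)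
    have inner: "(\<Sum>\<sigma>\<in>{\<sigma>. \<sigma> permutes {..<n}}. c \<sigma> * frob_delta (card (UNIV :: 'k set)) n \<sigma> z) = a f / fact n"
      if z: "z \<in> root_tuples n f" for z
    proof -
      obtain \<sigma>0 where s0: "\<sigma>0 permutes {..<n}" "pat z \<sigma>0"
        and u: "\<And>\<sigma>'. \<sigma>' permutes {..<n} \<Longrightarrow> pat z \<sigma>' \<Longrightarrow> \<sigma>' = \<sigma>0"
        using unique_sigma[OF mon f(2) z] unfolding pat_def by blast
      have "(\<Sum>\<sigma>\<in>{\<sigma>. \<sigma> permutes {..<n}}. c \<sigma> * frob_delta (card (UNIV :: 'k set)) n \<sigma> z)
          = (\<Sum>\<sigma>\<in>{\<sigma>. \<sigma> permutes {..<n}}. if \<sigma> = \<sigma>0 then c \<sigma>0 else 0)"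
      proof (intro sum.cong refl)
        fix \<sigma> assume "\<sigma> \<in> {\<sigma>. \<sigma> permutes {..<n}}"
        hence sp: "\<sigma> permutes {..<n}" by simp
        show "c \<sigma> * frob_delta (card (UNIV :: 'k set)) n \<sigma> z = (if \<sigma> = \<sigma>0 then c \<sigma>0 else 0)"
        proof (cases "\<sigma> = \<sigma>0")
          case True thus ?thesis using s0 by (simp add: frob_delta_def pat_def)
        next
          case False
          hence "\<not> pat z \<sigma>" using u sp by blast
          hence "frob_delta (card (UNIV :: 'k set)) n \<sigma> z = 0"
            unfolding frob_delta_def pat_def by auto
          thus ?thesis using False by simp
        qed
      qed
      also have "\<dots> = c \<sigma>0"
        using s0(1) by (simp add: sum.delta finite_permutations)
      also have "c \<sigma>0 = a f / fact n"
      proof -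
        have ex: "\<exists>g. g \<in> monic_polys n \<and> squarefree g \<and> (\<exists>w\<in>root_tuples n g. pat w \<sigma>0)"
          using f z s0 by blast
        have Gp: "G \<sigma>0 \<in> monic_polys n \<and> squarefree (G \<sigma>0) \<and> (\<exists>w\<in>root_tuples n (G \<sigma>0). pat w \<sigma>0)"
          unfolding G_def by (rule someI_ex[OF ex])
        then obtain w where w: "w \<in> root_tuples n (G \<sigma>0)" "pat w \<sigma>0" by blast
        have "fact_data (G \<sigma>0) = fact_data f"
          by (rule fact_data_eq[of _ n w _ z \<sigma>0]) (use Gp w f z s0 in \<open>auto simp: pat_def\<close>)
        hence "a (G \<sigma>0) = a f"
          using assms(2) Gp f unfolding factorization_function_def by blast
        thus ?thesis by (simp add: c_def)
      qed
      finally show ?thesis .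
    qed
    have "\<phi> f = (\<Sum>z\<in>root_tuples n f. a f / fact n)"
      unfolding \<phi>_def by (intro sum.cong refl) (rule inner)
    also have "\<dots> = real (card (root_tuples n f)) * (a f / fact n)" by simp
    also have "card (root_tuples n f) = fact n" by (rule card_RT[OF mon deg f(2)])
    finally show ?thesis by simp
  qed
  show ?thesis using vm agree by blast
qed


end
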